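(* Let $X$ be a Banach space and let $f\colon B_{X^*}\to\mathbb F$ be a Borel, $S_{\mathbb F}$-homogeneous, strongly affine function. Then for every Radon probability measure $\mu$ on $B_{X^*}$ there exists a sequence $(x_n)\subset X$ with $\|x_n\|\le\|f\|_\infty$ for all $n$ such that $t(x_n)\to f(t)$ for $\mu$-almost every $t\in B_{X^*}$.
   Context: $\mathbb F\in\{\mathbb R,\mathbb C\}$, $S_{\mathbb F}=\{|\alpha|=1\}$. $B_{X^*}$ carries the weak$^*$ topology. $f$ is $S_{\mathbb F}$-homogeneous if $f(\alpha t)=\alpha f(t)$ for $\alpha\in S_{\mathbb F}$. A real function $g$ on a compact convex set $K$ is strongly affine if it is bounded, Borel, and $\int_K g\,d\nu=g(r(\nu))$ for every Radon probability $\nu$ on $K$, where $r(\nu)$ is the barycenter of $\nu$; a complex function is strongly affine if its real and imaginary parts are. *)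

theory Defs
  imports "HOL-Analysis.Analysis" "HOL-Probability.Probability"
begin

text \<open>Scalar field F: a type 'f that is a real normed field and a finite-dimensional
  real Euclidean space (i.e. R or C up to isomorphism). The F-Banach space X is a real
  Banach space 'a together with a scalar multiplication sc by 'f extending scaleR.\<close>

definition scalar_structure :: "('f::{real_normed_field,euclidean_space} \<Rightarrow> 'a::banach \<Rightarrow> 'a) \<Rightarrow> bool" where
  "scalar_structure sc \<longleftrightarrow>
     (\<forall>a b x. sc (a * b) x = sc a (sc b x)) \<and>
     (\<forall>a b x. sc (a + b) x = sc a x + sc b x) \<and>
     (\<forall>a x y. sc a (x + y) = sc a x + sc a y) \<and>
     (\<forall>r x. sc (of_real r) x = r *\<^sub>R x) \<and>
     (\<forall>a x. norm (sc a x) = norm a * norm x)"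

text \<open>Closed unit ball of the dual X^*, as a subset of the function space 'a => 'f,
  which carries the product topology (= weak* topology on functionals).\<close>

definition dual_ball :: "('f::{real_normed_field,euclidean_space} \<Rightarrow> 'a::banach \<Rightarrow> 'a) \<Rightarrow> ('a \<Rightarrow> 'f) set" where
  "dual_ball sc = {t. (\<forall>x y. t (x + y) = t x + t y) \<and> (\<forall>a x. t (sc a x) = a * t x)
                     \<and> (\<forall>x. norm (t x) \<le> norm x)}"

definition radon_prob :: "'b::topological_space set \<Rightarrow> 'b measure \<Rightarrow> bool" where
  "radon_prob K \<nu> \<longleftrightarrow> sets \<nu> = sets (restrict_space borel K) \<and> space \<nu> = K \<and>
     prob_space \<nu> \<and>
     (\<forall>A\<in>sets \<nu>. emeasure \<nu> A = (SUP C\<in>{C. compact C \<and> C \<subseteq> A}. emeasure \<nu> C))"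

text \<open>Barycenter of a measure on the dual ball: the point r of K whose evaluation at every
  x (the weak*-continuous linear functionals) equals the integral of evaluations.\<close>

definition is_barycenter :: "('a \<Rightarrow> 'f::{real_normed_field,euclidean_space}) set \<Rightarrow> ('a \<Rightarrow> 'f) measure \<Rightarrow> ('a \<Rightarrow> 'f) \<Rightarrow> bool" where
  "is_barycenter K \<nu> r \<longleftrightarrow> r \<in> K \<and>
     (\<forall>x. integrable \<nu> (\<lambda>t. t x) \<and> r x = (\<integral>t. t x \<partial>\<nu>))"

definition strongly_affine_real :: "('a \<Rightarrow> 'f::{real_normed_field,euclidean_space}) set \<Rightarrow> (('a \<Rightarrow> 'f) \<Rightarrow> real) \<Rightarrow> bool" where
  "strongly_affine_real K g \<longleftrightarrow>
     (\<exists>M. \<forall>t\<in>K. \<bar>g t\<bar> \<le> M) \<and>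
     g \<in> borel_measurable (restrict_space borel K) \<and>
     (\<forall>\<nu> r. radon_prob K \<nu> \<longrightarrow> is_barycenter K \<nu> r \<longrightarrow> (\<integral>t. g t \<partial>\<nu>) = g r)"

text \<open>An F-valued function is strongly affine iff its real coordinates (real and imaginary
  parts in the complex case) are.\<close>

definition strongly_affine :: "('a \<Rightarrow> 'f::{real_normed_field,euclidean_space}) set \<Rightarrow> (('a \<Rightarrow> 'f) \<Rightarrow> 'f) \<Rightarrow> bool" where
  "strongly_affine K f \<longleftrightarrow> (\<forall>b\<in>Basis. strongly_affine_real K (\<lambda>t. f t \<bullet> b))"

definition S_homogeneous :: "('a \<Rightarrow> 'f::{real_normed_field,euclidean_space}) set \<Rightarrow> (('a \<Rightarrow> 'f) \<Rightarrow> 'f) \<Rightarrow> bool" where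
  "S_homogeneous K f \<longleftrightarrow> (\<forall>\<alpha>. norm \<alpha> = 1 \<longrightarrow> (\<forall>t\<in>K. f (\<lambda>x. \<alpha> * t x) = \<alpha> * f t))"

end

theory Submission
  imports Defs
begin


lemma compact_fun_closed:
  fixes C :: "('a \<Rightarrow> 'b::metric_space) set"
  assumes "compact C" shows "closed C"
proof -
  have H: "Hausdorff_space (euclidean :: ('a \<Rightarrow> 'b) topology)"
    using Hausdorff_space_product_topology[of "\<lambda>i. euclidean :: 'b topology" UNIV] by (simp add: euclidean_product_topology)
  show ?thesis using compactin_imp_closedin[OF H] assms
    unfolding closed_closedin by simp
qed

lemma q_le: "(q::real) \<ge> 0 \<Longrightarrow> q / (q + 1) \<le> 1" by simp

locale LS =
  fixes sc :: "'f::{real_normed_field,euclidean_space} \<Rightarrow> 'a::banach \<Rightarrow> 'a"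
    and f :: "('a \<Rightarrow> 'f) \<Rightarrow> 'f"
    and \<mu> :: "('a \<Rightarrow> 'f) measure"
  assumes ss: "scalar_structure sc"
    and fmeas: "f \<in> borel_measurable (restrict_space borel (dual_ball sc))"
    and hom: "S_homogeneous (dual_ball sc) f"
    and aff: "strongly_affine (dual_ball sc) f"
    and rad: "radon_prob (dual_ball sc) \<mu>"
begin

abbreviation "K \<equiv> dual_ball sc"
abbreviation "MB \<equiv> restrict_space borel K"

lemma sc_real: "sc (of_real r) x = r *\<^sub>R x"
  using ss unfolding scalar_structure_def by blast
lemma sc_norm: "norm (sc a x) = norm a * norm x"
  using ss unfolding scalar_structure_def by blast

lemma K_add: "t \<in> K \<Longrightarrow> t (x + y) = t x + t y"
  unfolding dual_ball_def by blast
lemma K_sc: "t \<in> K \<Longrightarrow> t (sc a x) = a * t x"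
  unfolding dual_ball_def by blast
lemma K_norm: "t \<in> K \<Longrightarrow> norm (t x) \<le> norm x"
  unfolding dual_ball_def by blast
lemma K_scaleR: "t \<in> K \<Longrightarrow> t (r *\<^sub>R x) = of_real r * t x"
  by (metis K_sc sc_real)
lemma K_zero: "t \<in> K \<Longrightarrow> t 0 = 0"
  using K_norm[of t 0] by simp
lemma K_diff: "t \<in> K \<Longrightarrow> t (x - y) = t x - t y"
  by (metis K_add add_diff_cancel diff_add_cancel eq_diff_eq)

lemma zero_K: "(\<lambda>x. 0) \<in> K"
  unfolding dual_ball_def by simp

lemma K_rot: "t \<in> K \<Longrightarrow> norm \<alpha> = 1 \<Longrightarrow> (\<lambda>x. \<alpha> * t x) \<in> K"
  unfolding dual_ball_def by (auto simp: distrib_left norm_mult mult.left_commute)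

lemma K_comb:
  assumes "finite I" "\<And>i. i \<in> I \<Longrightarrow> l i \<ge> 0" "sum l I = 1" "\<And>i. i \<in> I \<Longrightarrow> u i \<in> K"
  shows "(\<lambda>x. \<Sum>i\<in>I. l i *\<^sub>R u i x) \<in> K"
  unfolding dual_ball_def
proof (intro CollectI conjI allI)
  fix x y show "(\<Sum>i\<in>I. l i *\<^sub>R u i (x + y)) = (\<Sum>i\<in>I. l i *\<^sub>R u i x) + (\<Sum>i\<in>I. l i *\<^sub>R u i y)"
    using assms(4) by (simp add: K_add scaleR_add_right sum.distrib)
next
  fix a x show "(\<Sum>i\<in>I. l i *\<^sub>R u i (sc a x)) = a * (\<Sum>i\<in>I. l i *\<^sub>R u i x)"
    using assms(4) by (simp add: K_sc sum_distrib_left)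
next
  fix x
  have "norm (\<Sum>i\<in>I. l i *\<^sub>R u i x) \<le> (\<Sum>i\<in>I. norm (l i *\<^sub>R u i x))"
    by (rule norm_sum)
  also have "\<dots> \<le> (\<Sum>i\<in>I. l i * norm x)"
    using assms(2,4) K_norm by (intro sum_mono) (simp add: mult_left_mono)
  also have "\<dots> = norm x" using assms(3) by (simp add: sum_distrib_right[symmetric])
  finally show "norm (\<Sum>i\<in>I. l i *\<^sub>R u i x) \<le> norm x" .
qed

lemma sets_mu: "sets \<mu> = sets MB" and space_mu: "space \<mu> = K" and prob_mu: "prob_space \<mu>"
  using rad unfolding radon_prob_def by auto

lemma space_MB: "space MB = K" by (simp add: space_restrict_space)

lemma eval_meas_MB: "(\<lambda>t. t x) \<in> borel_measurable MB"
  by (intro measurable_restrict_space1 measurable_product_coordinates)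

lemma compact_sets_MB: "compact C \<Longrightarrow> C \<subseteq> K \<Longrightarrow> C \<in> sets MB"
  unfolding sets_restrict_space
  by (rule image_eqI[of _ _ C]) (auto intro: borel_closed compact_fun_closed)

lemma f_bounded: "\<exists>B. \<forall>t\<in>K. norm (f t) \<le> B"
proof -
  have "\<forall>b\<in>Basis. \<exists>M. \<forall>t\<in>K. \<bar>f t \<bullet> b\<bar> \<le> M"
    using aff unfolding strongly_affine_def strongly_affine_real_def by blast
  then obtain M where M: "\<And>b t. b \<in> Basis \<Longrightarrow> t \<in> K \<Longrightarrow> \<bar>f t \<bullet> b\<bar> \<le> M b"
    by metis
  have "norm (f t) \<le> (\<Sum>b\<in>Basis. M b)" if "t \<in> K" for t
    using norm_le_l1[of "f t"] sum_mono[of Basis "\<lambda>b. \<bar>f t \<bullet> b\<bar>" M] M that by force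
  then show ?thesis by blast
qed

lemma radon_integrable:
  assumes "radon_prob K \<nu>"
  shows "integrable \<nu> (\<lambda>t. t x)" "integrable \<nu> f"
proof -
  have s: "sets \<nu> = sets MB" "space \<nu> = K" "prob_space \<nu>"
    using assms unfolding radon_prob_def by auto
  interpret prob_space \<nu> by (fact s)
  show "integrable \<nu> (\<lambda>t. t x)"
    by (rule integrable_const_bound[where B="norm x"])
       (auto simp: s K_norm measurable_cong_sets[OF s(1) refl] eval_meas_MB)
  obtain B where B: "\<forall>t\<in>K. norm (f t) \<le> B" using f_bounded by blast
  show "integrable \<nu> f"
    by (rule integrable_const_bound[where B=B])
       (auto simp: s B measurable_cong_sets[OF s(1) refl] fmeas)
qed

lemma affine_vec:
  assumes "radon_prob K \<nu>" "is_barycenter K \<nu> r"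
  shows "f r = (\<integral>t. f t \<partial>\<nu>)"
proof (rule euclidean_eqI)
  fix b :: 'f assume b: "b \<in> Basis"
  have "strongly_affine_real K (\<lambda>t. f t \<bullet> b)" using aff b unfolding strongly_affine_def by blast
  then have "(\<integral>t. f t \<bullet> b \<partial>\<nu>) = f r \<bullet> b" using assms unfolding strongly_affine_real_def by blast
  moreover have "(\<integral>t. f t \<bullet> b \<partial>\<nu>) = (\<integral>t. f t \<partial>\<nu>) \<bullet> b"
    using radon_integrable(2)[OF assms(1)] by simp
  ultimately show "f r \<bullet> b = (\<integral>t. f t \<partial>\<nu>) \<bullet> b" by simp
qed

lemma affine_finite:
  assumes I: "finite I" and l: "\<And>i. i \<in> I \<Longrightarrow> l i \<ge> 0" and l1: "sum l I = 1"
    and u: "\<And>i. i \<in> I \<Longrightarrow> u i \<in> K"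
  shows "f (\<lambda>x. \<Sum>i\<in>I. l i *\<^sub>R u i x) = (\<Sum>i\<in>I. l i *\<^sub>R f (u i))"
proof -
  define D where "D = density (count_space I) (\<lambda>i. ennreal (l i))"
  define \<nu> where "\<nu> = distr D MB u"
  have um: "u \<in> measurable D MB"
    unfolding D_def using u by (simp add: measurable_count_space_eq1 space_MB)
  have sets_nu: "sets \<nu> = sets MB" and space_nu: "space \<nu> = K"
    unfolding \<nu>_def by (auto simp: space_MB)
  have emA: "emeasure \<nu> A = emeasure D (u -` A \<inter> I)" if "A \<in> sets MB" for A
    unfolding \<nu>_def using that um by (simp add: emeasure_distr D_def)
  have DI: "emeasure D I = 1"
    unfolding D_def using I l l1
    by (simp add: emeasure_density nn_integral_count_space_finite sum_ennreal)
  have sp: "emeasure \<nu> (space \<nu>) = 1"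
  proof -
    have "u -` K \<inter> I = I" using u by auto
    then show ?thesis using emA[of K] DI sets.top[of MB] by (simp add: space_nu space_MB)
  qed
  have inner: "emeasure \<nu> A = (SUP C\<in>{C. compact C \<and> C \<subseteq> A}. emeasure \<nu> C)" if A: "A \<in> sets \<nu>" for A
  proof (rule antisym)
    define C where "C = A \<inter> u ` I"
    have AK: "A \<subseteq> K" using A sets.sets_into_space[of A \<nu>] by (simp add: space_nu)
    have C: "compact C" "C \<subseteq> A" unfolding C_def using I by (auto intro!: finite_imp_compact)
    have CK: "C \<in> sets MB" using C AK by (intro compact_sets_MB) auto
    have "u -` C \<inter> I = u -` A \<inter> I" unfolding C_def by auto
    then have "emeasure \<nu> A = emeasure \<nu> C" using emA[OF CK] emA A sets_nu by simp
    also have "\<dots> \<le> (SUP C\<in>{C. compact C \<and> C \<subseteq> A}. emeasure \<nu> C)"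
      using C by (intro SUP_upper) auto
    finally show "emeasure \<nu> A \<le> (SUP C\<in>{C. compact C \<and> C \<subseteq> A}. emeasure \<nu> C)" .
    show "(SUP C\<in>{C. compact C \<and> C \<subseteq> A}. emeasure \<nu> C) \<le> emeasure \<nu> A"
      using A by (intro SUP_least emeasure_mono) auto
  qed
  have rad_nu: "radon_prob K \<nu>"
    unfolding radon_prob_def using sets_nu space_nu sp inner by (auto intro!: prob_spaceI)
  have int: "(\<integral>t. g t \<partial>\<nu>) = (\<Sum>i\<in>I. l i *\<^sub>R g (u i))"
    if g: "g \<in> borel_measurable MB" for g :: "('a \<Rightarrow> 'f) \<Rightarrow> 'f"
  proof -
    have "(\<integral>t. g t \<partial>\<nu>) = (\<integral>i. g (u i) \<partial>D)"
      unfolding \<nu>_def by (rule integral_distr[OF um g])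
    also have "\<dots> = (\<integral>i. l i *\<^sub>R g (u i) \<partial>count_space I)"
      unfolding D_def using l by (intro integral_density) (auto simp: AE_count_space)
    also have "\<dots> = (\<Sum>i\<in>I. l i *\<^sub>R g (u i))"
      using I by (rule lebesgue_integral_count_space_finite)
    finally show ?thesis .
  qed
  define r where "r = (\<lambda>x. \<Sum>i\<in>I. l i *\<^sub>R u i x)"
  have bar: "is_barycenter K \<nu> r"
    unfolding is_barycenter_def r_def
    using K_comb[OF I l l1 u] radon_integrable(1)[OF rad_nu] int[OF eval_meas_MB] by auto
  show ?thesis
    using affine_vec[OF rad_nu bar] int[OF fmeas] unfolding r_def by simp
qed


lemma meas_mu: "g \<in> borel_measurable MB \<Longrightarrow> g \<in> borel_measurable \<mu>"
  by (simp add: measurable_cong_sets[OF sets_mu refl])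

lemma bary_in_K:
  assumes rn: "radon_prob K \<nu>"
  shows "(\<lambda>x. \<integral>t. t x \<partial>\<nu>) \<in> K"
proof -
  have s: "sets \<nu> = sets MB" "space \<nu> = K" "prob_space \<nu>"
    using rn unfolding radon_prob_def by auto
  interpret P: prob_space \<nu> by (fact s)
  note ig = radon_integrable(1)[OF rn]
  show ?thesis unfolding dual_ball_def
  proof (intro CollectI conjI allI)
    fix x y
    have "(\<integral>t. t (x + y) \<partial>\<nu>) = (\<integral>t. t x + t y \<partial>\<nu>)"
      by (intro Bochner_Integration.integral_cong) (auto simp: s K_add)
    then show "(\<integral>t. t (x + y) \<partial>\<nu>) = (\<integral>t. t x \<partial>\<nu>) + (\<integral>t. t y \<partial>\<nu>)"
      using ig by simp
  next
    fix a x
    have "(\<integral>t. t (sc a x) \<partial>\<nu>) = (\<integral>t. a * t x \<partial>\<nu>)"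
      by (intro Bochner_Integration.integral_cong) (auto simp: s K_sc)
    then show "(\<integral>t. t (sc a x) \<partial>\<nu>) = a * (\<integral>t. t x \<partial>\<nu>)" by simp
  next
    fix x
    have "norm (\<integral>t. t x \<partial>\<nu>) \<le> (\<integral>t. norm (t x) \<partial>\<nu>)" by (rule integral_norm_bound)
    also have "\<dots> \<le> (\<integral>t. norm x \<partial>\<nu>)"
      using ig by (intro integral_mono) (auto simp: s K_norm)
    also have "\<dots> = norm x" by (simp add: P.prob_space)
    finally show "norm (\<integral>t. t x \<partial>\<nu>) \<le> norm x" .
  qed
qed

lemma inner_approx:
  assumes A: "A \<in> sets \<mu>" and d: "\<delta> > 0"
  shows "\<exists>C. compact C \<and> C \<subseteq> A \<and> C \<in> sets \<mu> \<and> measure \<mu> (A - C) < \<delta>"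
proof -
  interpret P: prob_space \<mu> by (rule prob_mu)
  have AK: "A \<subseteq> K" using sets.sets_into_space[OF A] space_mu by simp
  show ?thesis
  proof (cases "measure \<mu> A < \<delta>")
    case True then show ?thesis by (intro exI[of _ "{}"]) auto
  next
    case False
    have reg: "emeasure \<mu> A = (SUP C\<in>{C. compact C \<and> C \<subseteq> A}. emeasure \<mu> C)"
      using rad A unfolding radon_prob_def by blast
    have "ennreal (measure \<mu> A - \<delta>) < ennreal (measure \<mu> A)"
      using False d by (subst ennreal_less_iff) auto
    also have "\<dots> = emeasure \<mu> A" by (simp add: P.emeasure_eq_measure)
    finally obtain C where C: "compact C" "C \<subseteq> A" "ennreal (measure \<mu> A - \<delta>) < emeasure \<mu> C"
      unfolding reg less_SUP_iff by blast
    have Cs: "C \<in> sets \<mu>" using C AK compact_sets_MB sets_mu by auto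
    have "measure \<mu> A - \<delta> < measure \<mu> C"
      using C(3) False d Cs by (simp add: P.emeasure_eq_measure ennreal_less_iff)
    then have "measure \<mu> (A - C) < \<delta>" using P.finite_measure_Diff[OF A Cs C(2)] by simp
    then show ?thesis using C Cs by blast
  qed
qed

lemma density_bary:
  assumes wm: "w \<in> borel_measurable MB" and w0: "\<And>t. t \<in> K \<Longrightarrow> 0 \<le> w t"
    and wB: "\<And>t. t \<in> K \<Longrightarrow> w t \<le> B"
  shows "\<exists>r\<in>K. (\<forall>x. (\<integral>t. w t *\<^sub>R t x \<partial>\<mu>) = (\<integral>t. w t \<partial>\<mu>) *\<^sub>R r x) \<and>
             (\<integral>t. w t *\<^sub>R f t \<partial>\<mu>) = (\<integral>t. w t \<partial>\<mu>) *\<^sub>R f r"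
proof -
  interpret P: prob_space \<mu> by (rule prob_mu)
  have wmu[measurable]: "w \<in> borel_measurable \<mu>" using wm by (rule meas_mu)
  have evm[measurable]: "(\<lambda>t. t x) \<in> borel_measurable \<mu>" for x by (rule meas_mu[OF eval_meas_MB])
  have fm[measurable]: "f \<in> borel_measurable \<mu>" by (rule meas_mu[OF fmeas])
  have intw: "integrable \<mu> w"
    by (rule P.integrable_const_bound[where B=B]) (use w0 wB in \<open>auto intro!: AE_I2 simp: space_mu\<close>)
  define W where "W = (\<integral>t. w t \<partial>\<mu>)"
  have W0: "W \<ge> 0" unfolding W_def using w0 by (intro integral_nonneg_AE) (auto intro!: AE_I2 simp: space_mu)
  have B0: "B \<ge> 0" using w0[OF zero_K] wB[OF zero_K] by simp
  show ?thesis
  proof (cases "W = 0")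
    case True
    have "AE t in \<mu>. 0 \<le> w t" by (auto intro!: AE_I2 simp: space_mu w0)
    then have ae: "AE t in \<mu>. w t = 0"
      using integral_nonneg_eq_0_iff_AE[OF intw] True unfolding W_def by simp
    have z1: "(\<integral>t. w t *\<^sub>R t x \<partial>\<mu>) = 0" for x
      using ae by (subst integral_cong_AE[where g="\<lambda>_. 0"]) auto
    have z2: "(\<integral>t. w t *\<^sub>R f t \<partial>\<mu>) = 0"
      using ae by (subst integral_cong_AE[where g="\<lambda>_. 0"]) auto
    show ?thesis using True zero_K z1 z2 unfolding W_def[symmetric] by (intro bexI[of _ "\<lambda>x. 0"]) auto
  next
    case False
    then have Wp: "W > 0" using W0 by simp
    define \<nu> where "\<nu> = density \<mu> (\<lambda>t. ennreal (w t / W))"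
    have sets_nu: "sets \<nu> = sets MB" and space_nu: "space \<nu> = K"
      unfolding \<nu>_def by (auto simp: sets_mu space_mu)
    have emX: "emeasure \<nu> X = (\<integral>\<^sup>+ t. ennreal (w t / W) * indicator X t \<partial>\<mu>)" if "X \<in> sets \<mu>" for X
      unfolding \<nu>_def using that by (intro emeasure_density) auto
    have sp: "emeasure \<nu> (space \<nu>) = 1"
    proof -
      have "emeasure \<nu> (space \<nu>) = (\<integral>\<^sup>+ t. ennreal (w t / W) * indicator K t \<partial>\<mu>)"
        using emX[of K] sets.top[of \<mu>] by (simp add: space_nu space_mu)
      also have "\<dots> = (\<integral>\<^sup>+ t. ennreal (w t / W) \<partial>\<mu>)"
        by (intro nn_integral_cong) (auto simp: space_mu)
      also have "\<dots> = ennreal (\<integral>t. w t / W \<partial>\<mu>)"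
        using intw w0 Wp by (intro nn_integral_eq_integral) (auto intro!: AE_I2 simp: space_mu)
      also have "\<dots> = 1" using Wp unfolding W_def by simp
      finally show ?thesis .
    qed
    have bnd: "emeasure \<nu> X \<le> ennreal (B / W) * emeasure \<mu> X" if X: "X \<in> sets \<mu>" for X
    proof -
      have "emeasure \<nu> X \<le> (\<integral>\<^sup>+ t. ennreal (B / W) * indicator X t \<partial>\<mu>)"
        unfolding emX[OF X] using wB Wp
        by (intro nn_integral_mono) (auto simp: space_mu divide_right_mono intro!: ennreal_leI split: split_indicator)
      also have "\<dots> = ennreal (B / W) * emeasure \<mu> X" using X by (rule nn_integral_cmult_indicator)
      finally show ?thesis .
    qed
    have inner: "emeasure \<nu> A = (SUP C\<in>{C. compact C \<and> C \<subseteq> A}. emeasure \<nu> C)"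
      if A: "A \<in> sets \<nu>" for A
    proof (rule antisym)
      show "(SUP C\<in>{C. compact C \<and> C \<subseteq> A}. emeasure \<nu> C) \<le> emeasure \<nu> A"
        using A by (intro SUP_least emeasure_mono) auto
      show "emeasure \<nu> A \<le> (SUP C\<in>{C. compact C \<and> C \<subseteq> A}. emeasure \<nu> C)"
      proof (rule ennreal_le_epsilon)
        fix e :: real assume e: "0 < e"
        define \<delta> where "\<delta> = e / (B / W + 1)"
        have BW: "B / W \<ge> 0" using B0 Wp by simp
        have dp: "\<delta> > 0" unfolding \<delta>_def using e BW by (simp add: divide_pos_pos add_nonneg_pos)
        have Amu: "A \<in> sets \<mu>" using A sets_nu sets_mu by simp
        obtain C where C0: "compact C \<and> C \<subseteq> A \<and> C \<in> sets \<mu> \<and> measure \<mu> (A - C) < \<delta>"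
          using inner_approx[OF Amu dp] by (rule exE)
        then have C: "compact C" "C \<subseteq> A" "C \<in> sets \<mu>" "measure \<mu> (A - C) < \<delta>" by simp_all
        have DC: "A - C \<in> sets \<mu>" using Amu C by auto
        have "emeasure \<nu> A = emeasure \<nu> C + emeasure \<nu> (A - C)"
          using C DC Amu by (subst plus_emeasure) (auto simp: sets_nu sets_mu Un_absorb1)
        also have "emeasure \<nu> C \<le> (SUP C\<in>{C. compact C \<and> C \<subseteq> A}. emeasure \<nu> C)"
          using C by (intro SUP_upper) auto
        also have "emeasure \<nu> (A - C) \<le> ennreal (B / W) * emeasure \<mu> (A - C)"
          using DC by (rule bnd)
        also have "\<dots> = ennreal (B / W * measure \<mu> (A - C))"
          by (simp only: P.emeasure_eq_measure ennreal_mult'[OF BW])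
        also have "\<dots> \<le> ennreal e"
        proof (intro ennreal_leI)
          have "B / W * measure \<mu> (A - C) \<le> B / W * \<delta>"
            using C B0 Wp by (intro mult_left_mono) auto
          also have "\<dots> = e * ((B / W) / (B / W + 1))" unfolding \<delta>_def by simp
          also have "\<dots> \<le> e * 1"
            by (rule mult_left_mono[OF q_le[OF BW]]) (use e in simp)
          also have "\<dots> = e" by simp
          finally show "B / W * measure \<mu> (A - C) \<le> e" .
        qed
        finally show "emeasure \<nu> A \<le> (SUP C\<in>{C. compact C \<and> C \<subseteq> A}. emeasure \<nu> C) + ennreal e"
          by (simp add: add_mono)
      qed
    qed
    have rad_nu: "radon_prob K \<nu>"
      unfolding radon_prob_def using sets_nu space_nu sp inner by (auto intro!: prob_spaceI)
    have int: "(\<integral>t. g t \<partial>\<nu>) = (1 / W) *\<^sub>R (\<integral>t. w t *\<^sub>R g t \<partial>\<mu>)"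
      if g: "g \<in> borel_measurable MB" for g :: "('a \<Rightarrow> 'f) \<Rightarrow> 'f"
    proof -
      have gm: "g \<in> borel_measurable \<mu>" using g by (rule meas_mu)
      have "(\<integral>t. g t \<partial>\<nu>) = (\<integral>t. (w t / W) *\<^sub>R g t \<partial>\<mu>)"
        unfolding \<nu>_def using w0 Wp gm by (intro integral_density) (auto intro!: AE_I2 simp: space_mu)
      also have "\<dots> = (\<integral>t. (1 / W) *\<^sub>R (w t *\<^sub>R g t) \<partial>\<mu>)" by simp
      also have "\<dots> = (1 / W) *\<^sub>R (\<integral>t. w t *\<^sub>R g t \<partial>\<mu>)" by (rule integral_scaleR_right)
      finally show ?thesis .
    qed
    define r where "r = (\<lambda>x. \<integral>t. t x \<partial>\<nu>)"
    have rK: "r \<in> K" unfolding r_def by (rule bary_in_K[OF rad_nu])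
    have bar: "is_barycenter K \<nu> r"
      unfolding is_barycenter_def using rK radon_integrable(1)[OF rad_nu] by (simp add: r_def)
    have fr: "f r = (1 / W) *\<^sub>R (\<integral>t. w t *\<^sub>R f t \<partial>\<mu>)"
      using affine_vec[OF rad_nu bar] int[OF fmeas] by simp
    have rx: "r x = (1 / W) *\<^sub>R (\<integral>t. w t *\<^sub>R t x \<partial>\<mu>)" for x
      unfolding r_def by (rule int[OF eval_meas_MB])
    show ?thesis
      using rK fr rx Wp unfolding W_def[symmetric] by (intro bexI[of _ r]) auto
  qed
qed


end


context LS begin
definition cc where "cc = (SUP t\<in>K. norm (f t))"

lemma f_le_c: "t \<in> K \<Longrightarrow> norm (f t) \<le> cc"
proof -
  obtain B where B: "\<forall>t\<in>K. norm (f t) \<le> B" using f_bounded by blast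
  assume "t \<in> K" then show ?thesis
    unfolding cc_def using B by (intro cSUP_upper) (auto intro!: bdd_aboveI2)
qed

lemma c_nonneg: "cc \<ge> 0"
  using f_le_c[OF zero_K] norm_ge_zero order_trans by blast

lemma f_rot: "t \<in> K \<Longrightarrow> norm \<alpha> = 1 \<Longrightarrow> f (\<lambda>x. \<alpha> * t x) = \<alpha> * f t"
  using hom unfolding S_homogeneous_def by blast

lemma f_zero: "f (\<lambda>x. 0) = 0"
proof -
  have n1: "norm (-1::'f) = 1" by simp
  have "f (\<lambda>x. (-1) * 0) = (-1) * f (\<lambda>x. 0)"
    using f_rot[OF zero_K n1] by simp
  then show ?thesis by simp
qed


lemma Re_le_norm: "(v::'f) \<bullet> 1 \<le> norm v"
  using norm_cauchy_schwarz[of v 1] by simp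

lemma Re_of_real: "(of_real r :: 'f) \<bullet> 1 = r"
proof -
  have "(of_real r :: 'f) \<bullet> 1 = (r *\<^sub>R (1::'f)) \<bullet> 1" by (simp add: of_real_def)
  also have "\<dots> = r * ((1::'f) \<bullet> 1)" by simp
  also have "(1::'f) \<bullet> 1 = 1" by (simp add: dot_square_norm)
  finally show ?thesis by simp
qed

lemma lemmaC:
  assumes sK: "s \<in> K" and e: "\<eta> > 0"
  shows "\<exists>x. norm x \<le> cc \<and> f s \<bullet> 1 \<le> s x \<bullet> 1 + \<eta>"
proof -
  define \<rho> where "\<rho> = (SUP x\<in>{x. norm x \<le> 1}. norm (s x))"
  have bdd: "bdd_above ((\<lambda>x. norm (s x)) ` {x. norm x \<le> 1})"
    using K_norm[OF sK] by (intro bdd_aboveI2[of _ _ 1]) (auto intro: order_trans)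
  have ne: "{x::'a. norm x \<le> 1} \<noteq> {}" by (auto intro!: exI[of _ 0])
  have le_rho: "norm (s x) \<le> \<rho>" if "norm x \<le> 1" for x
    unfolding \<rho>_def using that bdd by (intro cSUP_upper) auto
  have rho0: "\<rho> \<ge> 0" using le_rho[of 0] K_zero[OF sK] by simp
  have rho1: "\<rho> \<le> 1" unfolding \<rho>_def using ne K_norm[OF sK] by (intro cSUP_least) (auto intro: order_trans)
  have sx: "norm (s x) \<le> \<rho> * norm x" for x
  proof (cases "x = 0")
    case True then show ?thesis using K_zero[OF sK] by simp
  next
    case False
    have "norm (s ((1 / norm x) *\<^sub>R x)) \<le> \<rho>" using False by (intro le_rho) simp
    then have "norm (s x) / norm x \<le> \<rho>" using False by (simp add: K_scaleR[OF sK] norm_divide)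
    moreover have "norm x > 0" using False by simp
    ultimately show ?thesis by (metis mult.commute pos_divide_le_eq)
  qed
  have fs: "norm (f s) \<le> \<rho> * cc"
  proof (cases "\<rho> = 0")
    case True
    then have "s = (\<lambda>x. 0)" using sx by (intro ext) (metis mult_zero_left norm_le_zero_iff)
    then show ?thesis using f_zero True by simp
  next
    case False
    then have rp: "\<rho> > 0" using rho0 by simp
    define v where "v = (\<lambda>x. (1 / \<rho>) *\<^sub>R s x)"
    have vK: "v \<in> K" unfolding dual_ball_def v_def
    proof (intro CollectI conjI allI)
      fix x y show "(1 / \<rho>) *\<^sub>R s (x + y) = (1 / \<rho>) *\<^sub>R s x + (1 / \<rho>) *\<^sub>R s y"
        by (simp add: K_add[OF sK] scaleR_add_right)
      fix a x show "(1 / \<rho>) *\<^sub>R s (sc a x) = a * ((1 / \<rho>) *\<^sub>R s x)" by (simp add: K_sc[OF sK])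
      have "norm ((1 / \<rho>) *\<^sub>R s x) = norm (s x) / \<rho>" using rp by simp
      also have "\<dots> \<le> norm x" using sx[of x] rp by (metis mult.commute pos_divide_le_eq)
      finally show "norm ((1 / \<rho>) *\<^sub>R s x) \<le> norm x" .
    qed
    define l where "l = (\<lambda>b::bool. if b then \<rho> else 1 - \<rho>)"
    define u where "u = (\<lambda>b::bool. if b then v else (\<lambda>x. 0))"
    have "f (\<lambda>x. \<Sum>i\<in>UNIV. l i *\<^sub>R u i x) = (\<Sum>i\<in>UNIV. l i *\<^sub>R f (u i))"
      by (rule affine_finite) (use rho0 rho1 vK zero_K in \<open>auto simp: l_def u_def UNIV_bool\<close>)
    moreover have "(\<lambda>x. \<Sum>i\<in>UNIV. l i *\<^sub>R u i x) = s"
      using rp by (intro ext) (simp add: l_def u_def UNIV_bool v_def)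
    ultimately have "f s = \<rho> *\<^sub>R f v" by (simp add: l_def u_def UNIV_bool f_zero)
    then show ?thesis using f_le_c[OF vK] rp by (simp add: mult_left_mono)
  qed
  define e' where "e' = \<eta> / (cc + 1)"
  have e': "e' > 0" unfolding e'_def using e c_nonneg by (intro divide_pos_pos) auto
  have "\<rho> - e' < \<rho>" using e' by simp
  then have "\<exists>x\<in>{x. norm x \<le> 1}. \<rho> - e' < norm (s x)"
    unfolding \<rho>_def by (rule less_cSUP_iff[OF ne bdd, THEN iffD1])
  then obtain x1 where x1: "norm x1 \<le> 1" "\<rho> - e' < norm (s x1)" by blast
  have ce: "cc * e' \<le> \<eta>"
  proof -
    have "cc * e' = \<eta> * (cc / (cc + 1))" unfolding e'_def by simp
    also have "\<dots> \<le> \<eta> * 1" by (rule mult_left_mono[OF q_le[OF c_nonneg]]) (use e in simp)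
    finally show ?thesis by simp
  qed
  show ?thesis
  proof (cases "s x1 = 0")
    case True
    have "f s \<bullet> 1 \<le> \<rho> * cc" using Re_le_norm[of "f s"] fs by simp
    also have "\<dots> \<le> e' * cc" using x1 True c_nonneg by (intro mult_right_mono) auto
    also have "\<dots> \<le> \<eta>" using ce by (simp add: mult.commute)
    finally show ?thesis using K_zero[OF sK] c_nonneg by (intro exI[of _ 0]) simp
  next
    case False
    define \<alpha> where "\<alpha> = (of_real (norm (s x1)) :: 'f) / s x1"
    have na: "norm \<alpha> = 1" unfolding \<alpha>_def using False by (simp add: norm_divide)
    define x where "x = cc *\<^sub>R sc \<alpha> x1"
    have nx: "norm x \<le> cc" unfolding x_def using c_nonneg x1 na
      by (simp add: sc_norm mult_left_le)
    have "s x = of_real cc * (\<alpha> * s x1)" unfolding x_def by (simp add: K_scaleR[OF sK] K_sc[OF sK])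
    also have "\<dots> = of_real (cc * norm (s x1))" unfolding \<alpha>_def using False by simp
    finally have sxe: "s x = of_real (cc * norm (s x1))" .
    have sx1: "s x \<bullet> 1 = cc * norm (s x1)" unfolding sxe by (rule Re_of_real)
    have "f s \<bullet> 1 \<le> \<rho> * cc" using Re_le_norm[of "f s"] fs by simp
    also have "\<dots> \<le> (norm (s x1) + e') * cc" using x1 c_nonneg by (intro mult_right_mono) auto
    also have "\<dots> = cc * norm (s x1) + cc * e'" by (simp add: algebra_simps)
    also have "\<dots> \<le> s x \<bullet> 1 + \<eta>" using sx1 ce by simp
    finally show ?thesis using nx by blast
  qed
qed

end


context LS begin

lemma unit_inner:
  fixes \<beta> a b :: 'f
  assumes "norm \<beta> = 1" shows "(\<beta> * a) \<bullet> (\<beta> * b) = a \<bullet> b"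
proof -
  have "(\<beta> * a) \<bullet> (\<beta> * b) = ((norm (\<beta> * a + \<beta> * b))\<^sup>2 - (norm (\<beta> * a))\<^sup>2 - (norm (\<beta> * b))\<^sup>2) / 2"
    by (rule dot_norm)
  also have "\<beta> * a + \<beta> * b = \<beta> * (a + b)" by (simp add: distrib_left)
  also have "((norm (\<beta> * (a + b)))\<^sup>2 - (norm (\<beta> * a))\<^sup>2 - (norm (\<beta> * b))\<^sup>2) / 2
      = ((norm (a + b))\<^sup>2 - (norm a)\<^sup>2 - (norm b)\<^sup>2) / 2"
    using assms by (simp add: norm_mult)
  also have "\<dots> = a \<bullet> b" by (rule dot_norm[symmetric])
  finally show ?thesis .
qed

lemma inner_unit:
  fixes \<beta> v :: 'f
  assumes n: "norm \<beta> = 1" shows "v \<bullet> \<beta> = (inverse \<beta> * v) \<bullet> 1"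
proof -
  have b0: "\<beta> \<noteq> 0" using n by auto
  have ni: "norm (inverse \<beta>) = 1" using n by (simp add: norm_inverse)
  have "(inverse \<beta> * v) \<bullet> 1 = (inverse \<beta> * v) \<bullet> (inverse \<beta> * \<beta>)" using b0 by simp
  also have "\<dots> = v \<bullet> \<beta>" by (rule unit_inner[OF ni])
  finally show ?thesis by simp
qed

lemma bnd_int:
  fixes g :: "('a \<Rightarrow> 'f) \<Rightarrow> 'b::{banach, second_countable_topology}"
  assumes "g \<in> borel_measurable MB" "\<And>t. t \<in> K \<Longrightarrow> norm (g t) \<le> B"
  shows "integrable \<mu> g"
proof -
  interpret P: prob_space \<mu> by (rule prob_mu)
  show ?thesis
    by (rule P.integrable_const_bound[where B=B]) (use assms in \<open>auto intro!: AE_I2 simp: space_mu meas_mu\<close>)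
qed

lemma KI:
  assumes hm[measurable]: "h \<in> borel_measurable MB" and hB: "\<And>t. t \<in> K \<Longrightarrow> norm (h t) \<le> Bh"
    and e: "\<eta> > 0"
  shows "\<exists>x. norm x \<le> cc \<and> (\<integral>t. h t \<bullet> f t \<partial>\<mu>) \<le> (\<integral>t. h t \<bullet> t x \<partial>\<mu>) + \<eta>"
proof -
  interpret P: prob_space \<mu> by (rule prob_mu)
  note fm[measurable] = fmeas
  note evm[measurable] = eval_meas_MB
  define I where "I = (Basis :: 'f set) \<times> (UNIV :: bool set)"
  define \<beta> where "\<beta> = (\<lambda>k::'f \<times> bool. if snd k then fst k else - fst k)"
  define w where "w = (\<lambda>k t. max 0 (if snd k then h t \<bullet> fst k else - (h t \<bullet> fst k)))"
  have finI: "finite I" unfolding I_def by simp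
  have nb: "norm (\<beta> k) = 1" if "k \<in> I" for k
    using that unfolding I_def \<beta>_def by (auto simp: norm_Basis)
  have wm[measurable]: "w k \<in> borel_measurable MB" for k
    unfolding w_def by measurable
  have w0: "0 \<le> w k t" for k t unfolding w_def by simp
  have wB: "w k t \<le> Bh" if "k \<in> I" "t \<in> K" for k t
  proof -
    have "\<bar>h t \<bullet> fst k\<bar> \<le> norm (h t) * norm (fst k)" by (rule Cauchy_Schwarz_ineq2)
    also have "\<dots> \<le> Bh" using that hB[of t] unfolding I_def by (auto simp: norm_Basis)
    finally show ?thesis unfolding w_def using hB[OF that(2)] by auto
  qed
  have Bh0: "Bh \<ge> 0" using hB[OF zero_K] norm_ge_zero order_trans by blast
  have pw: "h t \<bullet> v = (\<Sum>k\<in>I. w k t * (v \<bullet> \<beta> k))" for t v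
  proof -
    have "(\<Sum>k\<in>I. w k t * (v \<bullet> \<beta> k)) = (\<Sum>b\<in>Basis. \<Sum>s\<in>UNIV. w (b, s) t * (v \<bullet> \<beta> (b, s)))"
      unfolding I_def by (simp add: sum.cartesian_product)
    also have "\<dots> = (\<Sum>b\<in>Basis. (h t \<bullet> b) * (v \<bullet> b))"
      by (intro sum.cong refl) (simp add: UNIV_bool w_def \<beta>_def max_def)
    also have "\<dots> = h t \<bullet> v" by (rule euclidean_inner[symmetric])
    finally show ?thesis by simp
  qed
  have "\<forall>k\<in>I. \<exists>r. r \<in> K \<and> (\<forall>x. (\<integral>t. w k t *\<^sub>R t x \<partial>\<mu>) = (\<integral>t. w k t \<partial>\<mu>) *\<^sub>R r x) \<and>
             (\<integral>t. w k t *\<^sub>R f t \<partial>\<mu>) = (\<integral>t. w k t \<partial>\<mu>) *\<^sub>R f r"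
  proof
    fix k assume k: "k \<in> I"
    show "\<exists>r. r \<in> K \<and> (\<forall>x. (\<integral>t. w k t *\<^sub>R t x \<partial>\<mu>) = (\<integral>t. w k t \<partial>\<mu>) *\<^sub>R r x) \<and>
             (\<integral>t. w k t *\<^sub>R f t \<partial>\<mu>) = (\<integral>t. w k t \<partial>\<mu>) *\<^sub>R f r"
      using density_bary[OF wm w0 wB[OF k]] unfolding Bex_def .
  qed
  then obtain R where R0: "\<forall>k\<in>I. R k \<in> K \<and> (\<forall>x. (\<integral>t. w k t *\<^sub>R t x \<partial>\<mu>) = (\<integral>t. w k t \<partial>\<mu>) *\<^sub>R R k x) \<and>
             (\<integral>t. w k t *\<^sub>R f t \<partial>\<mu>) = (\<integral>t. w k t \<partial>\<mu>) *\<^sub>R f (R k)"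
    by (rule bchoice[THEN exE])
  have R: "\<And>k. k \<in> I \<Longrightarrow> R k \<in> K"
    "\<And>k x. k \<in> I \<Longrightarrow> (\<integral>t. w k t *\<^sub>R t x \<partial>\<mu>) = (\<integral>t. w k t \<partial>\<mu>) *\<^sub>R R k x"
    "\<And>k. k \<in> I \<Longrightarrow> (\<integral>t. w k t *\<^sub>R f t \<partial>\<mu>) = (\<integral>t. w k t \<partial>\<mu>) *\<^sub>R f (R k)"
    using R0 by auto
  define W where "W = (\<lambda>k. \<integral>t. w k t \<partial>\<mu>)"
  have W0: "W k \<ge> 0" for k unfolding W_def using w0 by (intro integral_nonneg_AE) auto
  define u where "u = (\<lambda>k x. inverse (\<beta> k) * R k x)"
  have ni: "norm (inverse (\<beta> k)) = 1" if "k \<in> I" for k using nb[OF that] by (simp add: norm_inverse)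
  have uK: "u k \<in> K" if "k \<in> I" for k unfolding u_def by (rule K_rot[OF R(1)[OF that] ni[OF that]])
  have fu: "f (u k) = inverse (\<beta> k) * f (R k)" if "k \<in> I" for k
    unfolding u_def by (rule f_rot[OF R(1)[OF that] ni[OF that]])
  have fb: "norm (f t) \<le> cc" if "t \<in> K" for t using f_le_c[OF that] .
  have int1: "integrable \<mu> (\<lambda>t. w k t *\<^sub>R f t)" if "k \<in> I" for k
    by (rule bnd_int[where B="Bh * cc"]) (use wB[OF that] w0 fb Bh0 c_nonneg in \<open>auto intro!: mult_mono\<close>)
  have int2: "integrable \<mu> (\<lambda>t. w k t *\<^sub>R t x)" if "k \<in> I" for k x
    by (rule bnd_int[where B="Bh * norm x"]) (use wB[OF that] w0 K_norm Bh0 in \<open>auto intro!: mult_mono\<close>)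
  have int3: "integrable \<mu> (\<lambda>t. w k t * (g t \<bullet> \<beta> k))"
    if "k \<in> I" and gi: "integrable \<mu> (\<lambda>t. w k t *\<^sub>R g t)" for k g
  proof -
    have "integrable \<mu> (\<lambda>t. (w k t *\<^sub>R g t) \<bullet> \<beta> k)" using gi by (rule integrable_inner_left)
    then show ?thesis by simp
  qed
  have Lk: "(\<integral>t. w k t * (f t \<bullet> \<beta> k) \<partial>\<mu>) = W k * (f (u k) \<bullet> 1)" if k: "k \<in> I" for k
  proof -
    have "(\<integral>t. w k t * (f t \<bullet> \<beta> k) \<partial>\<mu>) = (\<integral>t. (w k t *\<^sub>R f t) \<bullet> \<beta> k \<partial>\<mu>)" by simp
    also have "\<dots> = (\<integral>t. w k t *\<^sub>R f t \<partial>\<mu>) \<bullet> \<beta> k" using int1[OF k] by (rule integral_inner_left)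
    also have "\<dots> = W k * (f (R k) \<bullet> \<beta> k)" using R(3)[OF k] unfolding W_def by simp
    also have "f (R k) \<bullet> \<beta> k = f (u k) \<bullet> 1" using inner_unit[OF nb[OF k]] fu[OF k] by simp
    finally show ?thesis .
  qed
  have Rk: "(\<integral>t. w k t * (t x \<bullet> \<beta> k) \<partial>\<mu>) = W k * (u k x \<bullet> 1)" if k: "k \<in> I" for k x
  proof -
    have "(\<integral>t. w k t * (t x \<bullet> \<beta> k) \<partial>\<mu>) = (\<integral>t. (w k t *\<^sub>R t x) \<bullet> \<beta> k \<partial>\<mu>)" by simp
    also have "\<dots> = (\<integral>t. w k t *\<^sub>R t x \<partial>\<mu>) \<bullet> \<beta> k" using int2[OF k] by (rule integral_inner_left)
    also have "\<dots> = W k * (R k x \<bullet> \<beta> k)" using R(2)[OF k] unfolding W_def by simp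
    also have "R k x \<bullet> \<beta> k = u k x \<bullet> 1" using inner_unit[OF nb[OF k]] unfolding u_def by simp
    finally show ?thesis .
  qed
  have LHS: "(\<integral>t. h t \<bullet> f t \<partial>\<mu>) = (\<Sum>k\<in>I. W k * (f (u k) \<bullet> 1))"
  proof -
    have "(\<integral>t. h t \<bullet> f t \<partial>\<mu>) = (\<integral>t. (\<Sum>k\<in>I. w k t * (f t \<bullet> \<beta> k)) \<partial>\<mu>)" by (simp only: pw)
    also have "\<dots> = (\<Sum>k\<in>I. (\<integral>t. w k t * (f t \<bullet> \<beta> k) \<partial>\<mu>))"
      by (rule Bochner_Integration.integral_sum) (rule int3[OF _ int1])
    also have "\<dots> = (\<Sum>k\<in>I. W k * (f (u k) \<bullet> 1))" by (rule sum.cong[OF refl Lk])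
    finally show ?thesis .
  qed
  have RHS: "(\<integral>t. h t \<bullet> t x \<partial>\<mu>) = (\<Sum>k\<in>I. W k * (u k x \<bullet> 1))" for x
  proof -
    have "(\<integral>t. h t \<bullet> t x \<partial>\<mu>) = (\<integral>t. (\<Sum>k\<in>I. w k t * (t x \<bullet> \<beta> k)) \<partial>\<mu>)" by (simp only: pw)
    also have "\<dots> = (\<Sum>k\<in>I. (\<integral>t. w k t * (t x \<bullet> \<beta> k) \<partial>\<mu>))"
      by (rule Bochner_Integration.integral_sum) (rule int3[OF _ int2])
    also have "\<dots> = (\<Sum>k\<in>I. W k * (u k x \<bullet> 1))" by (rule sum.cong[OF refl Rk])
    finally show ?thesis .
  qed
  define Wt where "Wt = sum W I"
  have Wt0: "Wt \<ge> 0" unfolding Wt_def using W0 by (simp add: sum_nonneg)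
  show ?thesis
  proof (cases "Wt = 0")
    case True
    then have "\<forall>k\<in>I. W k = 0" using sum_nonneg_eq_0_iff[OF finI, of W] W0 unfolding Wt_def by simp
    then have "(\<integral>t. h t \<bullet> f t \<partial>\<mu>) = 0" "(\<integral>t. h t \<bullet> t 0 \<partial>\<mu>) = 0"
      unfolding LHS RHS by simp_all
    then show ?thesis using e c_nonneg by (intro exI[of _ 0]) simp
  next
    case False
    then have Wp: "Wt > 0" using Wt0 by simp
    define l where "l = (\<lambda>k. W k / Wt)"
    have l0: "k \<in> I \<Longrightarrow> 0 \<le> l k" for k unfolding l_def using W0 Wp by simp
    have l1: "sum l I = 1" unfolding l_def Wt_def using Wp unfolding Wt_def
      by (simp add: sum_divide_distrib[symmetric])
    define s where "s = (\<lambda>x. \<Sum>k\<in>I. l k *\<^sub>R u k x)"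
    have sK: "s \<in> K" unfolding s_def by (rule K_comb[OF finI l0 l1 uK])
    have fs: "f s = (\<Sum>k\<in>I. l k *\<^sub>R f (u k))" unfolding s_def by (rule affine_finite[OF finI l0 l1 uK])
    have L2: "(\<integral>t. h t \<bullet> f t \<partial>\<mu>) = Wt * (f s \<bullet> 1)"
      unfolding LHS fs l_def using Wp
      by (simp add: inner_sum_left sum_distrib_left)
    have R2: "(\<integral>t. h t \<bullet> t x \<partial>\<mu>) = Wt * (s x \<bullet> 1)" for x
      unfolding RHS s_def l_def using Wp
      by (simp add: inner_sum_left sum_distrib_left)
    obtain x where x: "norm x \<le> cc" "f s \<bullet> 1 \<le> s x \<bullet> 1 + \<eta> / Wt"
      using lemmaC[OF sK, of "\<eta> / Wt"] e Wp by auto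
    have "Wt * (f s \<bullet> 1) \<le> Wt * (s x \<bullet> 1 + \<eta> / Wt)" using x(2) Wp by (intro mult_left_mono) auto
    also have "\<dots> = Wt * (s x \<bullet> 1) + \<eta>" using Wp by (simp add: distrib_left)
    finally show ?thesis using x(1) unfolding L2 R2 by blast
  qed
qed

end


context LS begin

lemma sq_expand: "(norm (a - s *\<^sub>R b))\<^sup>2 = (norm a)\<^sup>2 - 2 * s * (a \<bullet> b) + s\<^sup>2 * (norm b)\<^sup>2"
  for a b :: "'f"
proof -
  have "(norm (a - s *\<^sub>R b))\<^sup>2 = (a - s *\<^sub>R b) \<bullet> (a - s *\<^sub>R b)" by (rule power2_norm_eq_inner)
  also have "\<dots> = a \<bullet> a - 2 * s * (a \<bullet> b) + s\<^sup>2 * (b \<bullet> b)"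
    by (simp add: inner_diff_left inner_diff_right inner_commute power2_eq_square algebra_simps)
  also have "\<dots> = (norm a)\<^sup>2 - 2 * s * (a \<bullet> b) + s\<^sup>2 * (norm b)\<^sup>2" by (simp add: power2_norm_eq_inner)
  finally show ?thesis .
qed

definition EE where "EE x = (\<integral>t. (norm (f t - t x))\<^sup>2 \<partial>\<mu>)"

lemma EE_approx:
  assumes eps: "\<epsilon> > 0"
  shows "\<exists>x. norm x \<le> cc \<and> EE x < \<epsilon>"
proof (rule ccontr)
  assume "\<not> ?thesis"
  then have ge: "\<And>x. norm x \<le> cc \<Longrightarrow> EE x \<ge> \<epsilon>" by (meson not_le)
  interpret P: prob_space \<mu> by (rule prob_mu)
  note fm[measurable] = fmeas
  note evm[measurable] = eval_meas_MB
  have fb: "norm (f t) \<le> cc" if "t \<in> K" for t using f_le_c[OF that] .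
  have cpos: "cc > 0"
  proof (rule ccontr)
    assume "\<not> cc > 0"
    then have "cc = 0" using c_nonneg by simp
    then have "f t = 0" if "t \<in> K" for t using fb[OF that] by simp
    then have "EE 0 = 0" unfolding EE_def
      by (subst Bochner_Integration.integral_cong[where g="\<lambda>_. 0"]) (auto simp: space_mu K_zero)
    then show False using ge[of 0] eps c_nonneg by simp
  qed
  define Ball where "Ball = {x::'a. norm x \<le> cc}"
  have ne: "Ball \<noteq> {}" unfolding Ball_def using c_nonneg by (auto intro!: exI[of _ 0])
  have bdd: "bdd_below (EE ` Ball)" unfolding Ball_def using ge by (intro bdd_belowI2[where m=\<epsilon>]) auto
  define d where "d = (INF x\<in>Ball. EE x)"
  have d_le: "d \<le> EE x" if "norm x \<le> cc" for x unfolding d_def using bdd that by (intro cINF_lower) (auto simp: Ball_def)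
  have d_ge: "d \<ge> \<epsilon>" unfolding d_def using ne ge by (intro cINF_greatest) (auto simp: Ball_def)
  have dp: "d > 0" using d_ge eps by simp
  define s where "s = min 1 (d / (8 * cc\<^sup>2))"
  have sp: "s > 0" unfolding s_def using dp cpos by simp
  have s1: "s \<le> 1" unfolding s_def by simp
  have s2: "4 * cc\<^sup>2 * s \<le> d / 2"
  proof -
    have "4 * cc\<^sup>2 * s \<le> 4 * cc\<^sup>2 * (d / (8 * cc\<^sup>2))" unfolding s_def
      by (intro mult_left_mono) auto
    also have "\<dots> = d / 2" using cpos by (simp add: field_simps power2_eq_square)
    finally show ?thesis .
  qed
  define \<delta> where "\<delta> = d * s / 2"
  have \<delta>p: "\<delta> > 0" unfolding \<delta>_def using dp sp by simp
  have "d < d + \<delta>" using \<delta>p by simp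
  then have "\<exists>x\<in>Ball. EE x < d + \<delta>" unfolding d_def by (rule cINF_less_iff[OF ne bdd, THEN iffD1])
  then obtain x0 where x0: "norm x0 \<le> cc" "EE x0 < d + \<delta>" unfolding Ball_def by blast
  define h where "h = (\<lambda>t. f t - t x0)"
  have hm[measurable]: "h \<in> borel_measurable MB" unfolding h_def by measurable
  have hb: "norm (h t) \<le> 2 * cc" if "t \<in> K" for t
  proof -
    have "norm (h t) \<le> norm (f t) + norm (t x0)" unfolding h_def by (rule norm_triangle_ineq4)
    also have "\<dots> \<le> cc + cc" using fb[OF that] K_norm[OF that, of x0] x0(1) by simp
    finally show ?thesis by simp
  qed
  obtain x where x: "norm x \<le> cc" "(\<integral>t. h t \<bullet> f t \<partial>\<mu>) \<le> (\<integral>t. h t \<bullet> t x \<partial>\<mu>) + d / 4"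
    using KI[OF hm hb, of "d / 4"] dp by auto
  define g where "g = (\<lambda>t::'a \<Rightarrow> 'f. t x - t x0)"
  have gm[measurable]: "g \<in> borel_measurable MB" unfolding g_def by measurable
  have gb: "norm (g t) \<le> 2 * cc" if "t \<in> K" for t
  proof -
    have "norm (g t) \<le> norm (t x) + norm (t x0)" unfolding g_def by (rule norm_triangle_ineq4)
    also have "\<dots> \<le> cc + cc" using K_norm[OF that, of x] K_norm[OF that, of x0] x0(1) x(1) by simp
    finally show ?thesis by simp
  qed
  define xs where "xs = x0 + s *\<^sub>R (x - x0)"
  have nxs: "norm xs \<le> cc"
  proof -
    have "xs = (1 - s) *\<^sub>R x0 + s *\<^sub>R x" unfolding xs_def by (simp add: algebra_simps)
    then have "norm xs \<le> (1 - s) * norm x0 + s * norm x"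
      using sp s1 by (metis abs_of_nonneg diff_ge_0_iff_ge less_imp_le norm_scaleR norm_triangle_ineq)
    also have "\<dots> \<le> (1 - s) * cc + s * cc"
      using sp s1 x0(1) x(1) by (intro add_mono mult_left_mono) auto
    finally show ?thesis by (simp add: algebra_simps)
  qed
  have pt: "(norm (f t - t xs))\<^sup>2 = (norm (h t))\<^sup>2 - 2 * s * (h t \<bullet> g t) + s\<^sup>2 * (norm (g t))\<^sup>2"
    if t: "t \<in> K" for t
  proof -
    have "t xs = t x0 + s *\<^sub>R g t"
      unfolding xs_def g_def using t by (simp add: K_add K_diff K_scaleR scaleR_conv_of_real)
    then have "f t - t xs = h t - s *\<^sub>R g t" unfolding h_def by simp
    then show ?thesis by (simp only: sq_expand)
  qed
  have hsq: "(norm (h t))\<^sup>2 \<le> (2 * cc)\<^sup>2" if "t \<in> K" for t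
    by (rule power_mono[OF hb[OF that]]) simp
  have gsq: "(norm (g t))\<^sup>2 \<le> (2 * cc)\<^sup>2" if "t \<in> K" for t
    by (rule power_mono[OF gb[OF that]]) simp
  have i1: "integrable \<mu> (\<lambda>t. (norm (h t))\<^sup>2)"
  proof (rule bnd_int[where B="(2 * cc)\<^sup>2"])
    show "(\<lambda>t. (norm (h t))\<^sup>2) \<in> borel_measurable MB" by measurable
    fix t assume t: "t \<in> K"
    show "norm ((norm (h t))\<^sup>2) \<le> (2 * cc)\<^sup>2" using hsq[OF t] by (simp only: real_norm_def abs_of_nonneg zero_le_power2)
  qed
  have i2: "integrable \<mu> (\<lambda>t. h t \<bullet> g t)"
  proof (rule bnd_int[where B="(2 * cc) * (2 * cc)"])
    show "(\<lambda>t. h t \<bullet> g t) \<in> borel_measurable MB" by measurable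
    fix t assume t: "t \<in> K"
    have "norm (h t \<bullet> g t) \<le> norm (h t) * norm (g t)" using Cauchy_Schwarz_ineq2 by simp
    also have "\<dots> \<le> (2 * cc) * (2 * cc)" using hb[OF t] gb[OF t] c_nonneg by (intro mult_mono) auto
    finally show "norm (h t \<bullet> g t) \<le> (2 * cc) * (2 * cc)" .
  qed
  have i3: "integrable \<mu> (\<lambda>t. (norm (g t))\<^sup>2)"
  proof (rule bnd_int[where B="(2 * cc)\<^sup>2"])
    show "(\<lambda>t. (norm (g t))\<^sup>2) \<in> borel_measurable MB" by measurable
    fix t assume t: "t \<in> K"
    show "norm ((norm (g t))\<^sup>2) \<le> (2 * cc)\<^sup>2" using gsq[OF t] by (simp only: real_norm_def abs_of_nonneg zero_le_power2)
  qed
  have i4: "integrable \<mu> (\<lambda>t. h t \<bullet> t y)" if "norm y \<le> cc" for y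
  proof (rule bnd_int[where B="(2 * cc) * cc"])
    show "(\<lambda>t. h t \<bullet> t y) \<in> borel_measurable MB" by measurable
    fix t assume t: "t \<in> K"
    have "norm (h t \<bullet> t y) \<le> norm (h t) * norm (t y)" using Cauchy_Schwarz_ineq2 by simp
    also have "\<dots> \<le> (2 * cc) * cc" using hb[OF t] K_norm[OF t, of y] that c_nonneg by (intro mult_mono) auto
    finally show "norm (h t \<bullet> t y) \<le> (2 * cc) * cc" .
  qed
  have i5: "integrable \<mu> (\<lambda>t. h t \<bullet> f t)"
  proof (rule bnd_int[where B="(2 * cc) * cc"])
    show "(\<lambda>t. h t \<bullet> f t) \<in> borel_measurable MB" by measurable
    fix t assume t: "t \<in> K"
    have "norm (h t \<bullet> f t) \<le> norm (h t) * norm (f t)" using Cauchy_Schwarz_ineq2 by simp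
    also have "\<dots> \<le> (2 * cc) * cc" using hb[OF t] fb[OF t] c_nonneg by (intro mult_mono) auto
    finally show "norm (h t \<bullet> f t) \<le> (2 * cc) * cc" .
  qed
  define A0 where "A0 = (\<integral>t. h t \<bullet> f t \<partial>\<mu>)"
  define A1 where "A1 = (\<integral>t. h t \<bullet> t x \<partial>\<mu>)"
  define A2 where "A2 = (\<integral>t. h t \<bullet> t x0 \<partial>\<mu>)"
  define G2 where "G2 = (\<integral>t. (norm (g t))\<^sup>2 \<partial>\<mu>)"
  have F1: "EE x0 = A0 - A2"
  proof -
    have "EE x0 = (\<integral>t. h t \<bullet> f t - h t \<bullet> t x0 \<partial>\<mu>)"
      unfolding EE_def by (intro Bochner_Integration.integral_cong)
        (auto simp: h_def power2_norm_eq_inner inner_diff_right)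
    also have "\<dots> = A0 - A2" unfolding A0_def A2_def using i5 i4[OF x0(1)] by (rule Bochner_Integration.integral_diff)
    finally show ?thesis .
  qed
  have HG: "(\<integral>t. h t \<bullet> g t \<partial>\<mu>) = A1 - A2"
  proof -
    have "(\<integral>t. h t \<bullet> g t \<partial>\<mu>) = (\<integral>t. h t \<bullet> t x - h t \<bullet> t x0 \<partial>\<mu>)"
      unfolding g_def by (simp add: inner_diff_right)
    also have "\<dots> = A1 - A2" unfolding A1_def A2_def using i4[OF x(1)] i4[OF x0(1)]
      by (rule Bochner_Integration.integral_diff)
    finally show ?thesis .
  qed
  have F2: "EE xs = EE x0 - 2 * s * (A1 - A2) + s\<^sup>2 * G2"
  proof -
    have "EE xs = (\<integral>t. (norm (h t))\<^sup>2 - 2 * s * (h t \<bullet> g t) + s\<^sup>2 * (norm (g t))\<^sup>2 \<partial>\<mu>)"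
      unfolding EE_def by (intro Bochner_Integration.integral_cong) (auto simp: space_mu pt)
    also have "\<dots> = (\<integral>t. (norm (h t))\<^sup>2 - 2 * s * (h t \<bullet> g t) \<partial>\<mu>) + (\<integral>t. s\<^sup>2 * (norm (g t))\<^sup>2 \<partial>\<mu>)"
      using i1 i2 i3 by (intro Bochner_Integration.integral_add) auto
    also have "(\<integral>t. (norm (h t))\<^sup>2 - 2 * s * (h t \<bullet> g t) \<partial>\<mu>) = (\<integral>t. (norm (h t))\<^sup>2 \<partial>\<mu>) - (\<integral>t. 2 * s * (h t \<bullet> g t) \<partial>\<mu>)"
      using i1 i2 by (intro Bochner_Integration.integral_diff) auto
    also have "(\<integral>t. (norm (h t))\<^sup>2 \<partial>\<mu>) = EE x0" unfolding EE_def h_def ..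
    also have "(\<integral>t. 2 * s * (h t \<bullet> g t) \<partial>\<mu>) = 2 * s * (A1 - A2)" using HG by simp
    also have "(\<integral>t. s\<^sup>2 * (norm (g t))\<^sup>2 \<partial>\<mu>) = s\<^sup>2 * G2" unfolding G2_def by simp
    finally show ?thesis .
  qed
  have F3: "G2 \<le> 4 * cc\<^sup>2"
  proof -
    have "G2 \<le> (\<integral>t. (2 * cc)\<^sup>2 \<partial>\<mu>)" unfolding G2_def
      using i3 gsq by (intro integral_mono) (auto simp: space_mu)
    also have "\<dots> = 4 * cc\<^sup>2" by (simp add: P.prob_space power_mult_distrib)
    finally show ?thesis .
  qed
  have F4: "A0 \<le> A1 + d / 4" using x(2) unfolding A0_def A1_def .
  have F5: "EE xs \<ge> d" using d_le[OF nxs] .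
  have "2 * s * (A1 - A2) \<le> EE x0 - d + s\<^sup>2 * G2" using F2 F5 by simp
  also have "\<dots> < \<delta> + s\<^sup>2 * (4 * cc\<^sup>2)" using x0(2) F3 sp by (intro add_less_le_mono mult_left_mono) auto
  finally have a: "2 * s * (A1 - A2) < \<delta> + s\<^sup>2 * (4 * cc\<^sup>2)" .
  have b: "d \<le> A1 - A2 + d / 4" using F1 F4 d_le[OF x0(1)] by simp
  have "2 * s * d \<le> 2 * s * (A1 - A2 + d / 4)" using b sp by (intro mult_left_mono) auto
  also have "\<dots> = 2 * s * (A1 - A2) + s * d / 2" by (simp add: algebra_simps)
  also have "\<dots> < \<delta> + s\<^sup>2 * (4 * cc\<^sup>2) + s * d / 2" using a by simp
  also have "\<dots> = s * d + s * (4 * cc\<^sup>2 * s)" unfolding \<delta>_def by (simp add: power2_eq_square algebra_simps)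
  also have "\<dots> \<le> s * d + s * (d / 2)" using s2 sp by (intro add_left_mono mult_left_mono) auto
  finally have "2 * s * d < s * d + s * (d / 2)" .
  then show False using sp dp by (simp add: algebra_simps)
qed

end


context LS begin

lemma final: "\<exists>xs :: nat \<Rightarrow> 'a. (\<forall>n. norm (xs n) \<le> cc) \<and> (AE t in \<mu>. (\<lambda>n. t (xs n)) \<longlonglongrightarrow> f t)"
proof -
  interpret P: prob_space \<mu> by (rule prob_mu)
  note fm[measurable] = fmeas
  note evm[measurable] = eval_meas_MB
  have "\<forall>n::nat. \<exists>x. norm x \<le> cc \<and> EE x < (1/2)^n" using EE_approx by simp
  then obtain xs where xs0: "\<forall>n. norm (xs n) \<le> cc \<and> EE (xs n) < (1/2)^n"
    by (rule choice[THEN exE])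
  then have xs: "\<And>n. norm (xs n) \<le> cc" "\<And>n. EE (xs n) < (1/2)^n" by simp_all
  define F where "F = (\<lambda>n t. ennreal ((norm (f t - t (xs n)))\<^sup>2))"
  have Fm[measurable]: "F n \<in> borel_measurable \<mu>" for n
    unfolding F_def by (intro meas_mu) measurable
  have intF: "integrable \<mu> (\<lambda>t. (norm (f t - t (xs n)))\<^sup>2)" for n
  proof (rule bnd_int[where B="(2 * cc)\<^sup>2"])
    show "(\<lambda>t. (norm (f t - t (xs n)))\<^sup>2) \<in> borel_measurable MB" by measurable
    fix t assume t: "t \<in> K"
    have "norm (f t - t (xs n)) \<le> norm (f t) + norm (t (xs n))" by (rule norm_triangle_ineq4)
    also have "\<dots> \<le> cc + cc" using f_le_c[OF t] K_norm[OF t, of "xs n"] xs(1)[of n] by simp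
    finally have "norm (f t - t (xs n)) \<le> 2 * cc" by simp
    then have "(norm (f t - t (xs n)))\<^sup>2 \<le> (2 * cc)\<^sup>2" by (rule power_mono) simp
    then show "norm ((norm (f t - t (xs n)))\<^sup>2) \<le> (2 * cc)\<^sup>2"
      by (simp only: real_norm_def abs_of_nonneg zero_le_power2)
  qed
  have nnF: "(\<integral>\<^sup>+t. F n t \<partial>\<mu>) = ennreal (EE (xs n))" for n
    unfolding F_def EE_def by (rule nn_integral_eq_integral[OF intF]) simp
  have "(\<integral>\<^sup>+t. (\<Sum>n. F n t) \<partial>\<mu>) = (\<Sum>n. (\<integral>\<^sup>+t. F n t \<partial>\<mu>))"
    by (rule nn_integral_suminf) (rule Fm)
  also have "\<dots> = (\<Sum>n. ennreal (EE (xs n)))" by (simp only: nnF)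
  also have "\<dots> \<le> (\<Sum>n. ennreal ((1/2)^n))"
    by (rule suminf_le[OF _ summableI summableI]) (use xs(2) in \<open>auto intro!: ennreal_leI less_imp_le\<close>)
  also have "\<dots> = ennreal (\<Sum>n. (1/2::real)^n)"
    by (rule suminf_ennreal2) (auto intro!: summable_geometric)
  also have "\<dots> = ennreal 2" by (simp add: suminf_geometric)
  finally have fin: "(\<integral>\<^sup>+t. (\<Sum>n. F n t) \<partial>\<mu>) \<noteq> \<infinity>" by (auto simp: top_unique)
  have "AE t in \<mu>. (\<Sum>n. F n t) \<noteq> \<infinity>"
    by (rule nn_integral_PInf_AE[OF _ fin]) measurable
  then show ?thesis
  proof (intro exI[of _ xs] conjI allI xs(1), elim AE_mp, intro AE_I2 impI)
    fix t assume "(\<Sum>n. F n t) \<noteq> \<infinity>"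
    then have "summable (\<lambda>n. (norm (f t - t (xs n)))\<^sup>2)"
      unfolding F_def by (intro summable_suminf_not_top) auto
    then have "(\<lambda>n. (norm (f t - t (xs n)))\<^sup>2) \<longlonglongrightarrow> 0" by (rule summable_LIMSEQ_zero)
    then have "(\<lambda>n. sqrt ((norm (f t - t (xs n)))\<^sup>2)) \<longlonglongrightarrow> sqrt 0" by (rule tendsto_real_sqrt)
    then have "(\<lambda>n. norm (f t - t (xs n))) \<longlonglongrightarrow> 0" by simp
    then have "(\<lambda>n. f t - t (xs n)) \<longlonglongrightarrow> 0" by (simp only: tendsto_norm_zero_iff)
    then have "(\<lambda>n. f t - (f t - t (xs n))) \<longlonglongrightarrow> f t - 0" by (intro tendsto_diff tendsto_const)
    then show "(\<lambda>n. t (xs n)) \<longlonglongrightarrow> f t" by simp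
  qed
qed

end

theorem lemma2p8:
  fixes sc :: "'f::{real_normed_field,euclidean_space} \<Rightarrow> 'a::banach \<Rightarrow> 'a"
    and f :: "('a \<Rightarrow> 'f) \<Rightarrow> 'f"
    and \<mu> :: "('a \<Rightarrow> 'f) measure"
  assumes "scalar_structure sc"
    and "f \<in> borel_measurable (restrict_space borel (dual_ball sc))"
    and "S_homogeneous (dual_ball sc) f"
    and "strongly_affine (dual_ball sc) f"
    and "radon_prob (dual_ball sc) \<mu>"
  shows "\<exists>xs :: nat \<Rightarrow> 'a.
           (\<forall>n. norm (xs n) \<le> (SUP t\<in>dual_ball sc. norm (f t))) \<and>
           (AE t in \<mu>. (\<lambda>n. t (xs n)) \<longlonglongrightarrow> f t)"
proof -
  interpret L: LS sc f \<mu> by (rule LS.intro) (fact assms)+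
  show ?thesis using L.final unfolding L.cc_def .
qed


end
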